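(* The class $\mathbf{RMM}$ is not closed under homomorphisms: there exist a finite alphabet $\Sigma$, a language $L\in\mathbf{RMM}$ over $\Sigma$, and a monoid homomorphism $h:\Sigma^*\to\Sigma^*$ such that $h(L)\notin\mathbf{RMM}$.
   Context: A measure-many quantum finite automaton (MM-QFA) over a finite alphabet $\Sigma$ is a tuple $M=(Q,\Sigma,\{U_\sigma\}_{\sigma\in\Sigma\cup\{\$\}},q_0,Q_{acc},Q_{rej})$, where $Q$ is a finite set of states indexing an orthonormal basis of $\mathbb{C}^Q$, $\$\notin\Sigma$ is an end-marker, each $U_\sigma$ is unitary, $q_0$ is the initial state, and $Q$ is partitioned into $Q_{acc}$, $Q_{rej}$ and non-halting states $Q_{non}$, with orthogonal projections $P_{acc},P_{rej},P_{non}$ onto the corresponding spans. On input $x\in\Sigma^*$ it processes the symbols of $x\$$, maintaining $(\psi,p_{acc},p_{rej})$ initialised to $(|q_0\rangle,0,0)$: on reading $\sigma$, $\psi'=U_\sigma\psi$, $p_{acc}\mathrel{+}=\|P_{acc}\psi'\|^2$, $p_{rej}\mathrel{+}=\|P_{rej}\psi'\|^2$, $\psi\leftarrow P_{non}\psi'$. The acceptance probability $p_M(x)$ is the final $p_{acc}$. $M$ accepts $L$ with bounded error if for some $\lambda$ and $\epsilon>0$, $p_M(x)>\lambda+\epsilon$ for $x\in L$ and $p_M(x)<\lambda-\epsilon$ for $x\notin L$. $\mathbf{RMM}$ is the class of languages accepted by some MM-QFA with bounded error. *)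

theory Defs
  imports Complex_Main
begin

text \<open>The state set Q is represented as
  {0..<n}; states are basis indices, a state vector is a function nat => complex
  (only the entries below n matter), and a matrix is nat => nat => complex.
  Input symbols are Some sigma for sigma in Sigma; the end-marker is None.\<close>

definition unitary_mat :: "nat \<Rightarrow> (nat \<Rightarrow> nat \<Rightarrow> complex) \<Rightarrow> bool" where
  "unitary_mat n U \<longleftrightarrow>
     (\<forall>i<n. \<forall>j<n. (\<Sum>k<n. cnj (U k i) * U k j) = (if i = j then 1 else 0))"

definition mat_apply :: "nat \<Rightarrow> (nat \<Rightarrow> nat \<Rightarrow> complex) \<Rightarrow> (nat \<Rightarrow> complex) \<Rightarrow> (nat \<Rightarrow> complex)" where
  "mat_apply n U \<psi> = (\<lambda>i. if i < n then (\<Sum>j<n. U i j * \<psi> j) else 0)"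

definition proj :: "nat set \<Rightarrow> (nat \<Rightarrow> complex) \<Rightarrow> (nat \<Rightarrow> complex)" where
  "proj S \<psi> = (\<lambda>i. if i \<in> S then \<psi> i else 0)"

definition sqnorm_on :: "nat set \<Rightarrow> (nat \<Rightarrow> complex) \<Rightarrow> real" where
  "sqnorm_on S \<psi> = (\<Sum>i\<in>S. (cmod (\<psi> i))\<^sup>2)"

definition is_mmqfa :: "'a set \<Rightarrow> nat \<Rightarrow> ('a option \<Rightarrow> nat \<Rightarrow> nat \<Rightarrow> complex)
    \<Rightarrow> nat \<Rightarrow> nat set \<Rightarrow> nat set \<Rightarrow> bool" where
  "is_mmqfa \<Sigma> n U q0 Qacc Qrej \<longleftrightarrow>
     q0 < n \<and> Qacc \<subseteq> {0..<n} \<and> Qrej \<subseteq> {0..<n} \<and> Qacc \<inter> Qrej = {} \<and>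
     (\<forall>\<sigma>\<in>\<Sigma>. unitary_mat n (U (Some \<sigma>))) \<and> unitary_mat n (U None)"

definition mmqfa_step :: "nat \<Rightarrow> ('a option \<Rightarrow> nat \<Rightarrow> nat \<Rightarrow> complex) \<Rightarrow> nat set \<Rightarrow> nat set
    \<Rightarrow> (nat \<Rightarrow> complex) \<times> real \<times> real \<Rightarrow> 'a option \<Rightarrow> (nat \<Rightarrow> complex) \<times> real \<times> real" where
  "mmqfa_step n U Qacc Qrej st \<sigma> =
     (let (\<psi>, pa, pr) = st;
          \<psi>' = mat_apply n (U \<sigma>) \<psi>
      in (proj ({0..<n} - Qacc - Qrej) \<psi>',
          pa + sqnorm_on Qacc \<psi>',
          pr + sqnorm_on Qrej \<psi>'))"

definition mmqfa_accept_prob :: "nat \<Rightarrow> ('a option \<Rightarrow> nat \<Rightarrow> nat \<Rightarrow> complex) \<Rightarrow> nat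
    \<Rightarrow> nat set \<Rightarrow> nat set \<Rightarrow> 'a list \<Rightarrow> real" where
  "mmqfa_accept_prob n U q0 Qacc Qrej x =
     fst (snd (foldl (mmqfa_step n U Qacc Qrej)
                     (\<lambda>i. if i = q0 then 1 else 0, 0, 0)
                     (map Some x @ [None])))"

definition RMM :: "'a set \<Rightarrow> 'a list set \<Rightarrow> bool" where
  "RMM \<Sigma> L \<longleftrightarrow> L \<subseteq> lists \<Sigma> \<and>
     (\<exists>n U q0 Qacc Qrej. is_mmqfa \<Sigma> n U q0 Qacc Qrej \<and>
        (\<exists>thr \<epsilon>::real. \<epsilon> > 0 \<and>
           (\<forall>x\<in>lists \<Sigma>.
              (x \<in> L \<longrightarrow> mmqfa_accept_prob n U q0 Qacc Qrej x > thr + \<epsilon>) \<and>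
              (x \<notin> L \<longrightarrow> mmqfa_accept_prob n U q0 Qacc Qrej x < thr - \<epsilon>))))"

definition word_hom :: "'a set \<Rightarrow> ('a list \<Rightarrow> 'a list) \<Rightarrow> bool" where
  "word_hom \<Sigma> h \<longleftrightarrow> h ` lists \<Sigma> \<subseteq> lists \<Sigma> \<and> h [] = [] \<and>
     (\<forall>u\<in>lists \<Sigma>. \<forall>v\<in>lists \<Sigma>. h (u @ v) = h u @ h v)"

end

theory Submission
  imports Defs "HOL-Analysis.L2_Norm"
begin


definition nrm :: "nat \<Rightarrow> (nat \<Rightarrow> complex) \<Rightarrow> real" where
  "nrm n v = L2_set (\<lambda>i. cmod (v i)) {..<n}"

definition supp :: "nat \<Rightarrow> (nat \<Rightarrow> complex) \<Rightarrow> bool" where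
  "supp n v \<longleftrightarrow> (\<forall>i\<ge>n. v i = 0)"

lemma nrm_sq: "(nrm n v)\<^sup>2 = sqnorm_on {..<n} v"
  unfolding nrm_def L2_set_def sqnorm_on_def
  by (simp add: sum_nonneg)

lemma nrm_nonneg: "0 \<le> nrm n v"
  unfolding nrm_def by simp

lemma nrm_eq_sqrt: "nrm n v = sqrt (sqnorm_on {..<n} v)"
  by (metis nrm_sq nrm_nonneg real_sqrt_unique)

lemma nrm_triangle: "nrm n (\<lambda>i. a i + b i) \<le> nrm n a + nrm n b"
proof -
  have "nrm n (\<lambda>i. a i + b i) \<le> L2_set (\<lambda>i. cmod (a i) + cmod (b i)) {..<n}"
    unfolding nrm_def by (rule L2_set_mono) (auto intro: norm_triangle_ineq)
  also have "\<dots> \<le> nrm n a + nrm n b"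
    unfolding nrm_def by (rule L2_set_triangle_ineq)
  finally show ?thesis .
qed

lemma nrm_diff_triangle: "nrm n (\<lambda>i. a i - c i) \<le> nrm n (\<lambda>i. a i - b i) + nrm n (\<lambda>i. b i - c i)"
  using nrm_triangle[of n "\<lambda>i. a i - b i" "\<lambda>i. b i - c i"] by simp

lemma nrm_minus_commute: "nrm n (\<lambda>i. a i - b i) = nrm n (\<lambda>i. b i - a i)"
  unfolding nrm_def by (simp add: norm_minus_commute)

lemma cmod_le_nrm: "i < n \<Longrightarrow> cmod (v i) \<le> nrm n v"
  unfolding nrm_def by (rule member_le_L2_set) auto

lemma nrm_le_sum: "nrm n v \<le> (\<Sum>i<n. cmod (v i))"
  unfolding nrm_def by (rule L2_set_le_sum) auto

lemma mat_apply_supp: "supp n (mat_apply n U v)"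
  unfolding supp_def mat_apply_def by auto

lemma mat_apply_diff:
  "mat_apply n U (\<lambda>i. a i - b i) = (\<lambda>i. mat_apply n U a i - mat_apply n U b i)"
  unfolding mat_apply_def by (auto simp: sum_subtractf right_diff_distrib)

lemma cnorm_sq: "complex_of_real ((cmod z)\<^sup>2) = cnj z * z"
  by (metis complex_norm_square mult.commute)

lemma sum_swap3:
  "(\<Sum>i\<in>A. \<Sum>j\<in>B. \<Sum>k\<in>C. F i j k) = (\<Sum>j\<in>B. \<Sum>k\<in>C. \<Sum>i\<in>A. F i j k)"
proof -
  have "(\<Sum>i\<in>A. \<Sum>j\<in>B. \<Sum>k\<in>C. F i j k) = (\<Sum>j\<in>B. \<Sum>i\<in>A. \<Sum>k\<in>C. F i j k)"
    by (rule sum.swap)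
  also have "\<dots> = (\<Sum>j\<in>B. \<Sum>k\<in>C. \<Sum>i\<in>A. F i j k)"
    by (rule sum.cong[OF refl], rule sum.swap)
  finally show ?thesis .
qed

lemma unitary_iso:
  assumes "unitary_mat n U"
  shows "sqnorm_on {..<n} (mat_apply n U v) = sqnorm_on {..<n} v"
proof -
  have "complex_of_real (sqnorm_on {..<n} (mat_apply n U v))
      = (\<Sum>i<n. cnj (\<Sum>j<n. U i j * v j) * (\<Sum>k<n. U i k * v k))"
    unfolding sqnorm_on_def mat_apply_def of_real_sum
    by (intro sum.cong refl) (simp only: cnorm_sq, simp)
  also have "\<dots> = (\<Sum>i<n. \<Sum>j<n. \<Sum>k<n. cnj (v j) * v k * (cnj (U i j) * U i k))"
    apply (simp add: sum_product algebra_simps)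
    apply (rule sum.cong[OF refl])
    apply (rule sum.swap)
    done
  also have "\<dots> = (\<Sum>j<n. \<Sum>k<n. cnj (v j) * v k * (\<Sum>i<n. cnj (U i j) * U i k))"
    by (subst sum_swap3) (simp only: sum_distrib_left mult.assoc)
  also have "\<dots> = (\<Sum>j<n. \<Sum>k<n. cnj (v j) * v k * (if j = k then 1 else 0))"
    using assms unfolding unitary_mat_def by (intro sum.cong refl) simp
  also have "\<dots> = (\<Sum>j<n. cnj (v j) * v j)"
    by (intro sum.cong refl) (simp add: if_distrib sum.delta cong: if_cong)
  also have "\<dots> = complex_of_real (sqnorm_on {..<n} v)"
    unfolding sqnorm_on_def of_real_sum
    by (intro sum.cong refl) (simp only: cnorm_sq)
  finally show ?thesis using of_real_eq_iff by blast
qed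

lemma unitary_nrm: "unitary_mat n U \<Longrightarrow> nrm n (mat_apply n U v) = nrm n v"
  by (simp add: nrm_eq_sqrt unitary_iso)



lemma sqnorm_restrict:
  assumes "S \<subseteq> {..<n}"
  shows "sqnorm_on {..<n} (\<lambda>i. if i \<in> S then w i else 0) = sqnorm_on S w"
proof -
  have "sqnorm_on {..<n} (\<lambda>i. if i \<in> S then w i else 0) = (\<Sum>i\<in>{..<n}. if i \<in> S then (cmod (w i))\<^sup>2 else 0)"
    unfolding sqnorm_on_def by (intro sum.cong refl) auto
  also have "\<dots> = sum (\<lambda>i. (cmod (w i))\<^sup>2) ({..<n} \<inter> S)"
    by (simp add: sum.inter_restrict)
  also have "{..<n} \<inter> S = S" using assms by auto
  finally show ?thesis unfolding sqnorm_on_def .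
qed

lemma sqnorm_nonneg: "0 \<le> sqnorm_on S w"
  unfolding sqnorm_on_def by (simp add: sum_nonneg)

lemma sqnorm_split3:
  assumes "Qa \<subseteq> {..<n}" "Qr \<subseteq> {..<n}" "Qa \<inter> Qr = {}"
  shows "sqnorm_on {..<n} w = sqnorm_on Qa w + sqnorm_on Qr w + sqnorm_on ({0..<n} - Qa - Qr) w"
proof -
  have e: "{..<n} = (Qa \<union> Qr) \<union> ({0..<n} - Qa - Qr)" using assms by auto
  have fa: "finite Qa" "finite Qr" using assms finite_subset by blast+
  show ?thesis unfolding sqnorm_on_def
    by (subst e, subst sum.union_disjoint) (use assms fa in \<open>auto simp: sum.union_disjoint\<close>)
qed

locale mmq =
  fixes \<Sigma> :: "'a set" and n U q0 Qacc Qrej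
  assumes mm: "is_mmqfa \<Sigma> n U q0 Qacc Qrej"
begin

definition "R = {0..<n} - Qacc - Qrej"
definition "init = ((\<lambda>i. if i = q0 then 1 else 0) :: nat \<Rightarrow> complex, 0::real, 0::real)"
definition "st w = foldl (mmqfa_step n U Qacc Qrej) init (map Some w)"
definition "Nn w = sqnorm_on {..<n} (fst (st w))"
definition "PA w = fst (snd (st w))"
definition "PR w = snd (snd (st w))"

lemma Qs: "Qacc \<subseteq> {..<n}" "Qrej \<subseteq> {..<n}" "Qacc \<inter> Qrej = {}" "q0 < n"
  using mm unfolding is_mmqfa_def by auto

lemma unit: "\<sigma> \<in> \<Sigma> \<Longrightarrow> unitary_mat n (U (Some \<sigma>))" "unitary_mat n (U None)"
  using mm unfolding is_mmqfa_def by auto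

lemma st_snoc: "st (w @ [\<sigma>]) = mmqfa_step n U Qacc Qrej (st w) (Some \<sigma>)"
  unfolding st_def by simp

lemma accept_eq: "mmqfa_accept_prob n U q0 Qacc Qrej x =
   PA x + sqnorm_on Qacc (mat_apply n (U None) (fst (st x)))"
  unfolding mmqfa_accept_prob_def PA_def st_def init_def
  by (simp add: mmqfa_step_def Let_def split: prod.splits)

lemma step_eq: "mmqfa_step n U Qacc Qrej (\<psi>, pa, pr) \<sigma> =
   (proj R (mat_apply n (U \<sigma>) \<psi>), pa + sqnorm_on Qacc (mat_apply n (U \<sigma>) \<psi>),
    pr + sqnorm_on Qrej (mat_apply n (U \<sigma>) \<psi>))"
  unfolding mmqfa_step_def R_def by (simp add: Let_def)

lemma R_sub: "R \<subseteq> {..<n}" unfolding R_def by auto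

lemma step_cons:
  assumes "unitary_mat n (U \<sigma>)"
  shows "sqnorm_on {..<n} (proj R (mat_apply n (U \<sigma>) \<psi>))
           + sqnorm_on Qacc (mat_apply n (U \<sigma>) \<psi>) + sqnorm_on Qrej (mat_apply n (U \<sigma>) \<psi>)
         = sqnorm_on {..<n} \<psi>"
proof -
  have "sqnorm_on {..<n} (proj R (mat_apply n (U \<sigma>) \<psi>)) = sqnorm_on R (mat_apply n (U \<sigma>) \<psi>)"
    unfolding proj_def by (rule sqnorm_restrict[OF R_sub])
  moreover have "sqnorm_on {..<n} (mat_apply n (U \<sigma>) \<psi>) = sqnorm_on {..<n} \<psi>"
    by (rule unitary_iso[OF assms])
  ultimately show ?thesis using sqnorm_split3[OF Qs(1-3), of "mat_apply n (U \<sigma>) \<psi>"]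
    unfolding R_def by linarith
qed

lemma halt_vec:
  "sqnorm_on {..<n} (\<lambda>i. mat_apply n V \<psi> i - proj R (mat_apply n V \<psi>) i)
    = sqnorm_on Qacc (mat_apply n V \<psi>) + sqnorm_on Qrej (mat_apply n V \<psi>)"
proof -
  have "(\<lambda>i. mat_apply n V \<psi> i - proj R (mat_apply n V \<psi>) i)
      = (\<lambda>i. if i \<in> Qacc \<union> Qrej then mat_apply n V \<psi> i else 0)"
    using Qs unfolding proj_def R_def mat_apply_def by (auto simp: fun_eq_iff)
  hence "sqnorm_on {..<n} (\<lambda>i. mat_apply n V \<psi> i - proj R (mat_apply n V \<psi>) i)
      = sqnorm_on (Qacc \<union> Qrej) (mat_apply n V \<psi>)"
    using sqnorm_restrict[of "Qacc \<union> Qrej" n] Qs by simp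
  also have "\<dots> = sqnorm_on Qacc (mat_apply n V \<psi>) + sqnorm_on Qrej (mat_apply n V \<psi>)"
    unfolding sqnorm_on_def
    by (rule sum.union_disjoint) (use Qs finite_subset[OF Qs(1)] finite_subset[OF Qs(2)] in auto)
  finally show ?thesis .
qed

lemma supp_st: "supp n (fst (st w))"
proof (induction w rule: rev_induct)
  case Nil thus ?case using Qs by (simp add: st_def init_def supp_def)
next
  case (snoc x xs)
  obtain \<psi> pa pr where "st xs = (\<psi>, pa, pr)" by (metis prod.exhaust)
  thus ?case using R_sub by (auto simp: st_snoc step_eq supp_def proj_def)
qed

lemma cons_st: "w \<in> lists \<Sigma> \<Longrightarrow> Nn w + PA w + PR w = 1"
proof (induction w rule: rev_induct)
  case Nil
  have "sqnorm_on {..<n} (\<lambda>i. if i = q0 then 1 else 0 :: complex) = 1"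
    using sqnorm_restrict[of "{q0}" n "\<lambda>_. 1"] Qs by (auto simp: sqnorm_on_def)
  thus ?case by (simp add: Nn_def PA_def PR_def st_def init_def)
next
  case (snoc x xs)
  obtain \<psi> pa pr where e: "st xs = (\<psi>, pa, pr)" by (metis prod.exhaust)
  have "x \<in> \<Sigma>" "xs \<in> lists \<Sigma>" using snoc.prems by auto
  with snoc.IH step_cons[OF unit(1)[OF \<open>x \<in> \<Sigma>\<close>], of \<psi>] e show ?case
    by (simp add: Nn_def PA_def PR_def st_snoc step_eq)
qed

lemma mono_snoc: "PA w \<le> PA (w @ [x])" "PR w \<le> PR (w @ [x])"
proof -
  obtain \<psi> pa pr where e: "st w = (\<psi>, pa, pr)" by (metis prod.exhaust)
  show "PA w \<le> PA (w @ [x])" "PR w \<le> PR (w @ [x])"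
    using e by (simp_all add: PA_def PR_def st_snoc step_eq sqnorm_nonneg)
qed

lemma mono_app: "PA w \<le> PA (w @ u) \<and> PR w \<le> PR (w @ u)"
proof (induction u rule: rev_induct)
  case Nil thus ?case by simp
next
  case (snoc x xs)
  thus ?case using mono_snoc[of "w @ xs" x] by simp
qed

lemma N_mono: "w @ u \<in> lists \<Sigma> \<Longrightarrow> Nn (w @ u) \<le> Nn w"
  using cons_st[of w] cons_st[of "w @ u"] mono_app[of w u] by auto

lemma N_le1: "w \<in> lists \<Sigma> \<Longrightarrow> Nn w \<le> 1"
  using N_mono[of "[]" w] cons_st[of "[]"] by (simp add: Nn_def PA_def PR_def st_def init_def)

lemma N_nonneg: "0 \<le> Nn w" unfolding Nn_def by (rule sqnorm_nonneg)

lemma PA_gain: "w @ u \<in> lists \<Sigma> \<Longrightarrow> PA (w @ u) - PA w \<le> Nn w - Nn (w @ u)"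
  using cons_st[of w] cons_st[of "w @ u"] mono_app[of w u] by auto

end



definition mmul :: "nat \<Rightarrow> (nat \<Rightarrow> nat \<Rightarrow> complex) \<Rightarrow> (nat \<Rightarrow> nat \<Rightarrow> complex) \<Rightarrow> (nat \<Rightarrow> nat \<Rightarrow> complex)" where
  "mmul n A B = (\<lambda>i j. \<Sum>k<n. A i k * B k j)"

primrec mpow :: "nat \<Rightarrow> (nat \<Rightarrow> nat \<Rightarrow> complex) \<Rightarrow> nat \<Rightarrow> (nat \<Rightarrow> nat \<Rightarrow> complex)" where
  "mpow n A 0 = (\<lambda>i j. if i = j then 1 else 0)"
| "mpow n A (Suc k) = mmul n A (mpow n A k)"

lemma mat_apply_mmul: "mat_apply n A (mat_apply n B v) = mat_apply n (mmul n A B) v"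
proof -
  have "(\<Sum>k<n. A i k * (\<Sum>j<n. B k j * v j)) = (\<Sum>j<n. (\<Sum>k<n. A i k * B k j) * v j)" for i
    by (simp add: sum_distrib_left sum_distrib_right mult.assoc) (rule sum.swap)
  thus ?thesis unfolding mat_apply_def mmul_def by (auto simp: fun_eq_iff)
qed

lemma ifmul: "(if a then 1 else 0) * (z::complex) = (if a then z else 0)" by simp

lemma mat_apply_id: "supp n v \<Longrightarrow> mat_apply n (\<lambda>i j. if i = j then 1 else 0) v = v"
  unfolding mat_apply_def supp_def
  by (auto simp: fun_eq_iff ifmul sum.delta)

lemma funpow_mpow: "supp n v \<Longrightarrow> (mat_apply n A ^^ k) v = mat_apply n (mpow n A k) v"
  by (induction k) (simp_all add: mat_apply_id mat_apply_mmul)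

lemma funpow_supp: "supp n v \<Longrightarrow> supp n ((mat_apply n A ^^ k) v)"
  by (induction k) (simp_all add: mat_apply_supp)

lemma funpow_diff: "(mat_apply n A ^^ k) (\<lambda>i. a i - b i) = (\<lambda>i. (mat_apply n A ^^ k) a i - (mat_apply n A ^^ k) b i)"
  by (induction k) (simp_all add: mat_apply_diff)

lemma funpow_nrm: "unitary_mat n A \<Longrightarrow> nrm n ((mat_apply n A ^^ k) v) = nrm n v"
  by (induction k) (simp_all add: unitary_nrm)

definition ebas :: "nat \<Rightarrow> nat \<Rightarrow> complex" where "ebas l = (\<lambda>i. if i = l then 1 else 0)"

lemma nrm_ebas: "l < n \<Longrightarrow> nrm n (ebas l) = 1"
proof -
  assume "l < n"
  hence "sqnorm_on {..<n} (ebas l) = 1"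
    using sqnorm_restrict[of "{l}" n "\<lambda>_. 1"] by (auto simp: sqnorm_on_def ebas_def)
  thus ?thesis by (simp add: nrm_eq_sqrt)
qed

lemma mpow_entry:
  assumes "unitary_mat n A" "i < n" "l < n"
  shows "cmod (mpow n A k i l) \<le> 1"
proof -
  have s: "supp n (ebas l)" using assms by (auto simp: supp_def ebas_def)
  have "mpow n A k i l = mat_apply n (mpow n A k) (ebas l) i"
    using assms unfolding mat_apply_def ebas_def by (simp add: sum.delta mult.commute[of _ "if _ then _ else _"] ifmul)
  also have "\<dots> = (mat_apply n A ^^ k) (ebas l) i" using funpow_mpow[OF s] by simp
  finally have "cmod (mpow n A k i l) \<le> nrm n ((mat_apply n A ^^ k) (ebas l))"
    using cmod_le_nrm[OF assms(2)] by simp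
  also have "\<dots> = 1" using funpow_nrm[OF assms(1)] nrm_ebas[OF assms(3)] by simp
  finally show ?thesis .
qed

lemma floor_bound:
  fixes x :: real
  assumes "\<bar>x\<bar> \<le> 1"
  shows "\<lfloor>real K * x\<rfloor> \<in> {- int K..int K}"
proof -
  have "- real K \<le> real K * x" "real K * x \<le> real K"
    using assms mult_left_mono[of "-1" x "real K"] mult_left_mono[of x 1 "real K"] by auto
  thus ?thesis by (auto simp: le_floor_iff floor_le_iff)
qed

lemma floor_eq_close:
  fixes x y :: real
  assumes "K > 0" "\<lfloor>real K * x\<rfloor> = \<lfloor>real K * y\<rfloor>"
  shows "\<bar>x - y\<bar> < 1 / real K"
proof -
  have "\<bar>real K * x - real K * y\<bar> < 1"
    using assms(2) by linarith
  hence "real K * \<bar>x - y\<bar> < 1" by (simp add: abs_mult right_diff_distrib[symmetric])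
  thus ?thesis using assms(1) by (simp add: field_simps)
qed

lemma recurrence:
  assumes un: "unitary_mat n A" and dpos: "\<delta> > 0"
  shows "\<exists>d\<ge>1. \<forall>v. supp n v \<longrightarrow> nrm n v \<le> 1 \<longrightarrow>
            nrm n (\<lambda>i. (mat_apply n A ^^ d) v i - v i) \<le> \<delta>"
proof -
  define K :: nat where "K = nat \<lceil>2 * real n * real n / \<delta>\<rceil> + 1"
  have Kpos: "K > 0" unfolding K_def by simp
  have Kbig: "2 * real n * real n / \<delta> \<le> real K" unfolding K_def by linarith
  define cell where "cell k = (\<lambda>(i, l). if i < n \<and> l < n then
      (\<lfloor>real K * Re (mpow n A k i l)\<rfloor>, \<lfloor>real K * Im (mpow n A k i l)\<rfloor>) else (0, 0))" for k
  define F where "F = {f. \<forall>x. (x \<in> {..<n} \<times> {..<n} \<longrightarrow> f x \<in> {- int K..int K} \<times> {- int K..int K})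
                          \<and> (x \<notin> {..<n} \<times> {..<n} \<longrightarrow> f x = (0, 0))}"
  have finF: "finite F" unfolding F_def by (rule finite_set_of_finite_funs) auto
  have cellF: "cell k \<in> F" for k
  proof -
    have "cmod (mpow n A k i l) \<le> 1" if "i < n" "l < n" for i l
      using mpow_entry[OF un that] .
    hence "\<bar>Re (mpow n A k i l)\<bar> \<le> 1 \<and> \<bar>Im (mpow n A k i l)\<bar> \<le> 1" if "i < n" "l < n" for i l
      using that abs_Re_le_cmod abs_Im_le_cmod order_trans by blast
    thus ?thesis unfolding F_def cell_def using floor_bound by auto
  qed
  have "\<not> inj cell"
  proof
    assume "inj cell"
    hence "finite (UNIV :: nat set)"
      using finite_subset[of "range cell" F] cellF finF by (metis finite_imageD image_subsetI)
    thus False by simp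
  qed
  then obtain i0 j0 where ij: "i0 \<noteq> j0" "cell i0 = cell j0" unfolding inj_def by blast
  define i where "i = min i0 j0"
  define j where "j = max i0 j0"
  have ij2: "i < j" "cell i = cell j" using ij unfolding i_def j_def by (auto simp: min_def max_def)
  have close: "cmod (mpow n A j a b - mpow n A i a b) \<le> 2 / real K" if "a < n" "b < n" for a b
  proof -
    have "cell i (a, b) = cell j (a, b)" using ij2 by simp
    hence e: "\<lfloor>real K * Re (mpow n A i a b)\<rfloor> = \<lfloor>real K * Re (mpow n A j a b)\<rfloor>"
             "\<lfloor>real K * Im (mpow n A i a b)\<rfloor> = \<lfloor>real K * Im (mpow n A j a b)\<rfloor>"
      using that unfolding cell_def by auto
    have "cmod (mpow n A j a b - mpow n A i a b)
        \<le> \<bar>Re (mpow n A j a b - mpow n A i a b)\<bar> + \<bar>Im (mpow n A j a b - mpow n A i a b)\<bar>"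
      by (rule cmod_le)
    also have "\<dots> \<le> 1 / real K + 1 / real K"
      using floor_eq_close[OF Kpos e(1)[symmetric]] floor_eq_close[OF Kpos e(2)[symmetric]] by simp
    finally show ?thesis by simp
  qed
  define d where "d = j - i"
  have d1: "d \<ge> 1" using ij2 unfolding d_def by simp
  have jd: "j = i + d" using ij2 unfolding d_def by simp
  show ?thesis
  proof (intro exI[of _ d] conjI allI impI d1)
    fix v assume sv: "supp n v" and nv: "nrm n v \<le> 1"
    let ?P = "\<lambda>k. (mat_apply n A ^^ k)"
    have sd: "supp n (\<lambda>t. ?P d v t - v t)" using funpow_supp[OF sv, where A=A and k=d] sv by (simp add: supp_def)
    have "nrm n (\<lambda>t. ?P d v t - v t) = nrm n (?P i (\<lambda>t. ?P d v t - v t))"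
      using funpow_nrm[OF un] by simp
    also have "?P i (\<lambda>t. ?P d v t - v t) = (\<lambda>t. ?P j v t - ?P i v t)"
      unfolding funpow_diff jd funpow_add by simp
    also have "\<dots> = (\<lambda>t. mat_apply n (mpow n A j) v t - mat_apply n (mpow n A i) v t)"
      using funpow_mpow[OF sv] by simp
    also have "\<dots> = mat_apply n (\<lambda>a b. mpow n A j a b - mpow n A i a b) v"
      unfolding mat_apply_def by (auto simp: fun_eq_iff sum_subtractf left_diff_distrib)
    finally have eq: "nrm n (\<lambda>t. ?P d v t - v t) = nrm n (mat_apply n (\<lambda>a b. mpow n A j a b - mpow n A i a b) v)" .
    have comp: "cmod (mat_apply n (\<lambda>a b. mpow n A j a b - mpow n A i a b) v t) \<le> real n * (2 / real K)" for t
    proof (cases "t < n")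
      case True
      have "cmod (mat_apply n (\<lambda>a b. mpow n A j a b - mpow n A i a b) v t)
          \<le> (\<Sum>b<n. cmod ((mpow n A j t b - mpow n A i t b) * v b))"
        using True unfolding mat_apply_def by (simp add: sum_norm_le)
      also have "\<dots> \<le> (\<Sum>b<n. 2 / real K)"
      proof (rule sum_mono)
        fix b assume "b \<in> {..<n}"
        hence h1: "cmod (v b) \<le> 1" using cmod_le_nrm[of b n v] nv by simp
        have h2: "cmod (mpow n A j t b - mpow n A i t b) \<le> 2 / real K"
          using close True \<open>b \<in> {..<n}\<close> by simp
        have "cmod (mpow n A j t b - mpow n A i t b) * cmod (v b) \<le> 2 / real K * 1"
          by (rule mult_mono[OF h2 h1]) (use Kpos in auto)
        thus "cmod ((mpow n A j t b - mpow n A i t b) * v b) \<le> 2 / real K"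
          unfolding norm_mult by simp
      qed
      finally show ?thesis by simp
    next
      case False thus ?thesis by (simp add: mat_apply_def)
    qed
    have "nrm n (mat_apply n (\<lambda>a b. mpow n A j a b - mpow n A i a b) v) \<le> (\<Sum>t<n. real n * (2 / real K))"
      by (rule order_trans[OF nrm_le_sum sum_mono]) (use comp in auto)
    also have "\<dots> = 2 * real n * real n / real K" by simp
    also have "\<dots> \<le> \<delta>"
      using Kbig Kpos dpos by (simp add: field_simps)
    finally show "nrm n (\<lambda>t. ?P d v t - v t) \<le> \<delta>" using eq by simp
  qed
qed



lemma sqnorm_sub_le: "S \<subseteq> {..<n} \<Longrightarrow> sqnorm_on S w \<le> sqnorm_on {..<n} w"
  unfolding sqnorm_on_def by (rule sum_mono2) auto

lemma acc_diff:
  assumes un: "unitary_mat n V" and S: "S \<subseteq> {..<n}"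
    and nx: "nrm n x \<le> 1" and ny: "nrm n y \<le> 1"
  shows "sqnorm_on S (mat_apply n V x) - sqnorm_on S (mat_apply n V y) \<le> 2 * nrm n (\<lambda>i. x i - y i)"
proof -
  define f where "f z = L2_set (\<lambda>i. cmod (z i)) S" for z
  have fsq: "sqnorm_on S z = (f z)\<^sup>2" for z
    unfolding f_def L2_set_def sqnorm_on_def by (simp add: sum_nonneg)
  have fle: "f z \<le> nrm n z" for z
  proof -
    have "(f z)\<^sup>2 \<le> (nrm n z)\<^sup>2" using sqnorm_sub_le[OF S] by (simp add: fsq nrm_sq)
    thus ?thesis using nrm_nonneg[of n z] by (simp add: power_mono_iff abs_le_square_iff f_def)
  qed
  have f0: "0 \<le> f z" for z unfolding f_def by simp
  let ?x = "mat_apply n V x" and ?y = "mat_apply n V y"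
  have "f ?x \<le> f ?y + f (\<lambda>i. ?x i - ?y i)"
    using L2_set_triangle_ineq[of "\<lambda>i. cmod (?y i)" "\<lambda>i. cmod (?x i - ?y i)" S]
          L2_set_mono[of S "\<lambda>i. cmod (?x i)" "\<lambda>i. cmod (?y i) + cmod (?x i - ?y i)"]
    unfolding f_def by (smt (verit) add.commute diff_add_cancel norm_ge_zero norm_triangle_ineq)
  also have "f (\<lambda>i. ?x i - ?y i) \<le> nrm n (\<lambda>i. x i - y i)"
    using fle[of "\<lambda>i. ?x i - ?y i"] unitary_nrm[OF un, of "\<lambda>i. x i - y i"]
    by (simp add: mat_apply_diff)
  finally have d1: "f ?x - f ?y \<le> nrm n (\<lambda>i. x i - y i)" by simp
  have b1: "f ?x \<le> 1" "f ?y \<le> 1"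
    using fle[of ?x] fle[of ?y] unitary_nrm[OF un] nx ny by (metis order_trans)+
  have "(f ?x)\<^sup>2 - (f ?y)\<^sup>2 = (f ?x - f ?y) * (f ?x + f ?y)" by (simp add: power2_eq_square algebra_simps)
  also have "\<dots> \<le> nrm n (\<lambda>i. x i - y i) * 2"
  proof (cases "f ?x - f ?y \<ge> 0")
    case True
    thus ?thesis using d1 b1 f0[of ?x] f0[of ?y] nrm_nonneg[of n "\<lambda>i. x i - y i"]
      by (intro mult_mono) auto
  next
    case False
    hence "(f ?x - f ?y) * (f ?x + f ?y) \<le> 0"
      using f0[of ?x] f0[of ?y] by (simp add: mult_nonpos_nonneg)
    thus ?thesis using nrm_nonneg[of n "\<lambda>i. x i - y i"] by linarith
  qed
  finally show ?thesis by (simp add: fsq mult.commute)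
qed

context mmq
begin

lemma err:
  assumes "\<sigma> \<in> \<Sigma>" "p @ replicate k \<sigma> \<in> lists \<Sigma>"
  shows "nrm n (\<lambda>i. (mat_apply n (U (Some \<sigma>)) ^^ k) (fst (st p)) i - fst (st (p @ replicate k \<sigma>)) i)
           \<le> real k * sqrt (Nn p - Nn (p @ replicate k \<sigma>))"
  using assms(2)
proof (induction k)
  case 0
  thus ?case by (simp add: nrm_def L2_set_0')
next
  case (Suc k)
  let ?W = "mat_apply n (U (Some \<sigma>))"
  define q where "q = p @ replicate k \<sigma>"
  have qS: "p @ replicate (Suc k) \<sigma> = q @ [\<sigma>]"
    unfolding q_def by (simp add: replicate_append_same[symmetric])
  have ql: "q \<in> lists \<Sigma>" "q @ [\<sigma>] \<in> lists \<Sigma>" using Suc.prems qS by (auto simp: q_def)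
  have IH: "nrm n (\<lambda>i. (?W ^^ k) (fst (st p)) i - fst (st q) i) \<le> real k * sqrt (Nn p - Nn q)"
    using Suc.IH ql unfolding q_def by simp
  obtain \<psi> pa pr where e: "st q = (\<psi>, pa, pr)" by (metis prod.exhaust)
  let ?a = "(?W ^^ k) (fst (st p))"
  have stq': "st (q @ [\<sigma>]) = (proj R (?W \<psi>), pa + sqnorm_on Qacc (?W \<psi>), pr + sqnorm_on Qrej (?W \<psi>))"
    by (simp add: st_snoc e step_eq)
  have cons: "Nn (q @ [\<sigma>]) + sqnorm_on Qacc (?W \<psi>) + sqnorm_on Qrej (?W \<psi>) = Nn q"
    using step_cons[OF unit(1)[OF assms(1)], of \<psi>] stq' e by (simp add: Nn_def)
  have "(\<lambda>i. (?W ^^ Suc k) (fst (st p)) i - fst (st (q @ [\<sigma>])) i)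
      = (\<lambda>i. (?W ?a i - ?W \<psi> i) + (?W \<psi> i - proj R (?W \<psi>) i))"
    using stq' by (simp add: fun_eq_iff)
  hence "nrm n (\<lambda>i. (?W ^^ Suc k) (fst (st p)) i - fst (st (q @ [\<sigma>])) i)
       \<le> nrm n (\<lambda>i. ?W ?a i - ?W \<psi> i) + nrm n (\<lambda>i. ?W \<psi> i - proj R (?W \<psi>) i)"
    by (simp only: nrm_triangle)
  also have "nrm n (\<lambda>i. ?W ?a i - ?W \<psi> i) = nrm n (\<lambda>i. ?a i - \<psi> i)"
    using unitary_nrm[OF unit(1)[OF assms(1)], of "\<lambda>i. ?a i - \<psi> i"] by (simp add: mat_apply_diff)
  also have "nrm n (\<lambda>i. ?W \<psi> i - proj R (?W \<psi>) i) = sqrt (Nn q - Nn (q @ [\<sigma>]))"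
    using halt_vec[of "U (Some \<sigma>)" \<psi>] cons by (simp add: nrm_eq_sqrt)
  finally have 1: "nrm n (\<lambda>i. (?W ^^ Suc k) (fst (st p)) i - fst (st (q @ [\<sigma>])) i)
      \<le> real k * sqrt (Nn p - Nn q) + sqrt (Nn q - Nn (q @ [\<sigma>]))"
    using IH e by simp
  have m1: "Nn (q @ [\<sigma>]) \<le> Nn q" using N_mono ql by blast
  have m2: "Nn q \<le> Nn p" using N_mono ql unfolding q_def by blast
  have "sqrt (Nn p - Nn q) \<le> sqrt (Nn p - Nn (q @ [\<sigma>]))" using m1 by simp
  hence "real k * sqrt (Nn p - Nn q) \<le> real k * sqrt (Nn p - Nn (q @ [\<sigma>]))"
    by (simp add: mult_left_mono)
  moreover have "sqrt (Nn q - Nn (q @ [\<sigma>])) \<le> sqrt (Nn p - Nn (q @ [\<sigma>]))" using m2 by simp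
  moreover have "real (Suc k) * sqrt (Nn p - Nn (q @ [\<sigma>])) = real k * sqrt (Nn p - Nn (q @ [\<sigma>])) + sqrt (Nn p - Nn (q @ [\<sigma>]))"
    by (simp add: algebra_simps)
  ultimately have "nrm n (\<lambda>i. (?W ^^ Suc k) (fst (st p)) i - fst (st (q @ [\<sigma>])) i)
      \<le> real (Suc k) * sqrt (Nn p - Nn (q @ [\<sigma>]))" using 1 by linarith
  thus ?case by (simp only: qS)
qed

end



definition pw :: "'a \<Rightarrow> 'a \<Rightarrow> nat \<Rightarrow> nat \<Rightarrow> 'a list" where
  "pw a b d i = concat (replicate i (b # replicate d a)) @ [b]"

lemma pw_Suc: "pw a b d (Suc i) = pw a b d i @ replicate d a @ [b]"
proof -
  have "concat (replicate (Suc i) (b # replicate d a)) = concat (replicate i (b # replicate d a)) @ (b # replicate d a)"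
    by (metis concat.simps concat_append append_Nil2 replicate_Suc replicate_append_same)
  thus ?thesis unfolding pw_def by simp
qed

lemma pw_lists: "a \<in> \<Sigma> \<Longrightarrow> b \<in> \<Sigma> \<Longrightarrow> pw a b d i \<in> lists \<Sigma>"
  unfolding pw_def by (auto split: if_splits)

context mmq
begin

lemma no_accept:
  assumes a: "a \<in> \<Sigma>" and b: "b \<in> \<Sigma>" and eps: "\<epsilon> > 0"
    and H: "\<forall>x\<in>lists \<Sigma>. (x \<in> S \<longrightarrow> mmqfa_accept_prob n U q0 Qacc Qrej x > thr + \<epsilon>) \<and>
                         (x \<notin> S \<longrightarrow> mmqfa_accept_prob n U q0 Qacc Qrej x < thr - \<epsilon>)"
    and pat: "\<And>d i. d \<ge> 1 \<Longrightarrow> pw a b d i \<notin> S \<and> pw a b d i @ replicate d a \<in> S"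
  shows False
proof -
  let ?W = "mat_apply n (U (Some a))"
  obtain d where d1: "d \<ge> 1" and rec: "\<forall>v. supp n v \<longrightarrow> nrm n v \<le> 1 \<longrightarrow>
            nrm n (\<lambda>i. (?W ^^ d) v i - v i) \<le> \<epsilon> / 2"
    using recurrence[OF unit(1)[OF a], of "\<epsilon> / 2"] eps by auto
  define \<eta> where "\<eta> = (\<epsilon> / (2 * real d + 2))\<^sup>2"
  have \<eta>pos: "\<eta> > 0" unfolding \<eta>_def using eps by simp
  define c where "c i = Nn (pw a b d i)" for i
  have cl: "pw a b d i \<in> lists \<Sigma>" for i using pw_lists a b .
  have "\<exists>i. c i - c (Suc i) < \<eta>"
  proof (rule ccontr)
    assume "\<not> ?thesis"
    hence st1: "c (Suc i) \<le> c i - \<eta>" for i by (metis diff_ge_0_iff_ge diff_diff_eq2 le_diff_eq not_less add.commute)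
    have ck: "c k \<le> c 0 - real k * \<eta>" for k
    proof (induction k)
      case 0 thus ?case by simp
    next
      case (Suc k) thus ?case using st1[of k] by (simp add: algebra_simps)
    qed
    obtain k where k: "2 / \<eta> < real k" using reals_Archimedean2 by blast
    have "real k * \<eta> > 2" using k \<eta>pos by (simp add: field_simps)
    moreover have "c 0 \<le> 1" "0 \<le> c k" unfolding c_def using N_le1[OF cl] N_nonneg by auto
    ultimately show False using ck[of k] by linarith
  qed
  then obtain i where ci: "c i - c (Suc i) < \<eta>" by blast
  define P where "P = pw a b d i"
  define Q where "Q = P @ replicate d a"
  have PQ: "P \<in> lists \<Sigma>" "Q \<in> lists \<Sigma>" "Q @ [b] \<in> lists \<Sigma>"
    using cl[of i] cl[of "Suc i"] unfolding P_def Q_def pw_Suc by auto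
  define \<Delta> where "\<Delta> = Nn P - Nn Q"
  have \<Delta>0: "0 \<le> \<Delta>" unfolding \<Delta>_def Q_def using N_mono PQ(2)[unfolded Q_def] by simp
  have "Nn (Q @ [b]) \<le> Nn Q" using N_mono PQ(3) by blast
  hence \<Delta>\<eta>: "\<Delta> < \<eta>" using ci unfolding c_def \<Delta>_def P_def Q_def pw_Suc by simp
  have \<Delta>1: "\<Delta> \<le> 1" unfolding \<Delta>_def using N_le1[OF PQ(1)] N_nonneg[of Q] by simp
  define \<psi> where "\<psi> = fst (st P)"
  define \<psi>' where "\<psi>' = fst (st Q)"
  have n\<psi>: "nrm n \<psi> \<le> 1" "nrm n \<psi>' \<le> 1"
    unfolding \<psi>_def \<psi>'_def nrm_eq_sqrt
    using N_le1[OF PQ(1)] N_le1[OF PQ(2)] unfolding Nn_def by simp_all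
  have E1: "nrm n (\<lambda>j. (?W ^^ d) \<psi> j - \<psi>' j) \<le> real d * sqrt \<Delta>"
    using err[OF a, of P d] PQ(2) unfolding \<psi>_def \<psi>'_def \<Delta>_def Q_def by simp
  have E2: "nrm n (\<lambda>j. (?W ^^ d) \<psi> j - \<psi> j) \<le> \<epsilon> / 2"
    using rec supp_st n\<psi> unfolding \<psi>_def by blast
  have D: "nrm n (\<lambda>j. \<psi>' j - \<psi> j) \<le> real d * sqrt \<Delta> + \<epsilon> / 2"
    using nrm_diff_triangle[where n=n and a=\<psi>' and b="(?W ^^ d) \<psi>" and c=\<psi>] nrm_minus_commute[of n \<psi>' "(?W ^^ d) \<psi>"] E1 E2
    by linarith
  have acc: "mmqfa_accept_prob n U q0 Qacc Qrej Q - mmqfa_accept_prob n U q0 Qacc Qrej P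
      \<le> \<Delta> + 2 * nrm n (\<lambda>j. \<psi>' j - \<psi> j)"
    using accept_eq[of Q] accept_eq[of P] PA_gain[of P "replicate d a"] PQ(2)
      acc_diff[OF unit(2) Qs(1) n\<psi>(2) n\<psi>(1)]
    unfolding \<Delta>_def \<psi>_def \<psi>'_def Q_def by simp
  have sq: "sqrt \<Delta> < \<epsilon> / (2 * real d + 2)"
  proof -
    have "sqrt \<Delta> < sqrt \<eta>" using \<Delta>\<eta> \<Delta>0 by simp
    also have "sqrt \<eta> = \<epsilon> / (2 * real d + 2)" unfolding \<eta>_def using eps by simp
    finally show ?thesis .
  qed
  have \<Delta>sq: "\<Delta> \<le> sqrt \<Delta>"
  proof -
    have "sqrt \<Delta> \<le> 1" using \<Delta>1 by simp
    hence "sqrt \<Delta> * sqrt \<Delta> \<le> sqrt \<Delta>" using \<Delta>0 by (intro mult_right_le_one_le) auto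
    thus ?thesis using \<Delta>0 real_sqrt_mult_self[of \<Delta>] by simp
  qed
  have "(2 * real d + 1) * sqrt \<Delta> \<le> (2 * real d + 1) * (\<epsilon> / (2 * real d + 2))"
    using sq by (intro mult_left_mono) auto
  also have "\<dots> < \<epsilon>" using eps by (simp add: field_simps)
  finally have key: "(2 * real d + 1) * sqrt \<Delta> < \<epsilon>" .
  have "mmqfa_accept_prob n U q0 Qacc Qrej Q - mmqfa_accept_prob n U q0 Qacc Qrej P < 2 * \<epsilon>"
    using acc D key \<Delta>sq by (simp add: algebra_simps)
  moreover have "P \<notin> S" "Q \<in> S" using pat[OF d1, of i] unfolding P_def Q_def by auto
  moreover have "thr + \<epsilon> < mmqfa_accept_prob n U q0 Qacc Qrej Q" using H PQ(2) \<open>Q \<in> S\<close> by blast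
  moreover have "mmqfa_accept_prob n U q0 Qacc Qrej P < thr - \<epsilon>" using H PQ(1) \<open>P \<notin> S\<close> by blast
  ultimately show False by linarith
qed

end



definition gh :: "nat \<Rightarrow> nat list" where "gh c = (if c = 0 then [0] else [1, 0])"
definition hh :: "nat list \<Rightarrow> nat list" where "hh x = concat (map gh x)"

lemma hh_last: "hh x = [] \<or> last (hh x) = 0"
  by (induction x) (auto simp: hh_def gh_def)

lemma hh_rep0: "hh (replicate m 0) = replicate m 0"
  by (induction m) (auto simp: hh_def gh_def)

lemma hh_app: "hh (u @ v) = hh u @ hh v" by (simp add: hh_def)

lemma hh_concat_rep: "hh (concat (replicate k w)) = concat (replicate k (hh w))"
  by (induction k) (simp_all add: hh_app, simp add: hh_def)

lemma concat_rep_snoc: "concat (replicate i B) @ B = concat (replicate (Suc i) B)"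
  by (metis concat.simps concat_append append_Nil2 replicate_Suc replicate_append_same)

lemma hh_word_hom: "word_hom {0, 1} hh"
  unfolding word_hom_def by (auto simp: hh_def gh_def split: if_splits)

lemma pat_img:
  assumes "d \<ge> 1"
  shows "pw (0::nat) 1 d i \<notin> hh ` lists {0, 1} \<and> pw 0 1 d i @ replicate d 0 \<in> hh ` lists {0, 1}"
proof
  show "pw (0::nat) 1 d i \<notin> hh ` lists {0, 1}"
  proof
    assume "pw (0::nat) 1 d i \<in> hh ` lists {0, 1}"
    then obtain x where "pw 0 1 d i = hh x" by blast
    moreover have "pw (0::nat) 1 d i \<noteq> []" "last (pw (0::nat) 1 d i) = 1" by (simp_all add: pw_def)
    ultimately show False using hh_last[of x] by auto
  qed
next
  define w where "w = (1::nat) # replicate (d - 1) 0"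
  have hw: "hh w = 1 # replicate d 0"
    using assms hh_rep0[of "d - 1"] unfolding w_def
    by (cases d) (auto simp: hh_def gh_def)
  have "pw 0 1 d i @ replicate d 0 = concat (replicate (Suc i) (1 # replicate d (0::nat)))"
    unfolding pw_def using concat_rep_snoc[of i "1 # replicate d (0::nat)"] by simp
  also have "\<dots> = hh (concat (replicate (Suc i) w))" by (simp only: hh_concat_rep hw)
  finally show "pw 0 1 d i @ replicate d 0 \<in> hh ` lists {0, 1}"
    by (rule image_eqI) (auto simp: w_def split: if_splits)
qed

lemma (in mmq) PR_zero: "Qrej = {} \<Longrightarrow> PR x = 0"
proof (induction x rule: rev_induct)
  case Nil show ?case unfolding PR_def st_def init_def by simp
next
  case (snoc y ys)
  obtain \<psi> pa pr where e: "st ys = (\<psi>, pa, pr)" by (metis prod.exhaust)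
  have "PR ys = pr" using e by (simp add: PR_def)
  hence "pr = 0" using snoc by simp
  thus ?case unfolding PR_def st_snoc e step_eq using snoc.prems by (simp add: sqnorm_on_def)
qed

lemma all_RMM: "RMM {0, 1::nat} (lists {0, 1})"
proof -
  let ?U = "(\<lambda>_ _ _. 1) :: nat option \<Rightarrow> nat \<Rightarrow> nat \<Rightarrow> complex"
  have um: "unitary_mat 1 (?U s)" for s unfolding unitary_mat_def by simp
  have mm: "is_mmqfa {0, 1::nat} 1 ?U 0 {0} {}" unfolding is_mmqfa_def using um by auto
  interpret M: mmq "{0, 1::nat}" 1 ?U 0 "{0}" "{}" by (rule mmq.intro[OF mm])
  have PR0: "M.PR x = 0" for x by (rule M.PR_zero) simp
  have acc1: "mmqfa_accept_prob 1 ?U 0 {0} {} x = 1" if "x \<in> lists {0, 1}" for x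
  proof -
    have e1: "mat_apply 1 (?U None) (fst (M.st x)) 0 = fst (M.st x) 0"
      unfolding mat_apply_def by simp
    have e2: "{..<1::nat} = {0}" by auto
    have "sqnorm_on {0} (mat_apply 1 (?U None) (fst (M.st x))) = M.Nn x"
      unfolding M.Nn_def e2 sqnorm_on_def using e1 by simp
    thus ?thesis using M.accept_eq[of x] M.cons_st[OF that] PR0[of x] by simp
  qed
  show ?thesis unfolding RMM_def
    apply (rule conjI, rule subset_refl)
    apply (rule exI[of _ 1], rule exI[of _ ?U], rule exI[of _ 0], rule exI[of _ "{0}"], rule exI[of _ "{}"])
    apply (rule conjI, rule mm)
    apply (rule exI[of _ "1/2"], rule exI[of _ "1/4"])
    using acc1 by auto
qed

theorem theorem4p2:
  shows "\<exists>(\<Sigma>::nat set) (L::nat list set) (h::nat list \<Rightarrow> nat list).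
           finite \<Sigma> \<and> RMM \<Sigma> L \<and> word_hom \<Sigma> h \<and> \<not> RMM \<Sigma> (h ` L)"
proof (intro exI conjI)
  show "finite {0, 1::nat}" by simp
  show "RMM {0, 1::nat} (lists {0, 1})" by (rule all_RMM)
  show "word_hom {0, 1} hh" by (rule hh_word_hom)
  show "\<not> RMM {0, 1} (hh ` lists {0, 1})"
  proof
    assume "RMM {0, 1} (hh ` lists {0, 1})"
    then obtain n U q0 Qacc Qrej thr \<epsilon> where mm: "is_mmqfa {0, 1::nat} n U q0 Qacc Qrej"
      and eps: "\<epsilon> > 0"
      and H: "\<forall>x\<in>lists {0, 1}. (x \<in> hh ` lists {0, 1} \<longrightarrow> mmqfa_accept_prob n U q0 Qacc Qrej x > thr + \<epsilon>) \<and>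
                (x \<notin> hh ` lists {0, 1} \<longrightarrow> mmqfa_accept_prob n U q0 Qacc Qrej x < thr - \<epsilon>)"
      unfolding RMM_def by (elim conjE exE) (rule that, assumption+)
    interpret M: mmq "{0, 1::nat}" n U q0 Qacc Qrej by (rule mmq.intro[OF mm])
    show False
      by (rule M.no_accept[of 0 1 \<epsilon> "hh ` lists {0, 1}" thr]) (use eps H pat_img in auto)
  qed
qed


end
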